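(* Let $d\ge3$, $m\in(0,1)$, $0<D_1\le D_*\le D_0$, and let $w\in C^1(\mathbb R^d)$ satisfy $V_{D_0}\le wV_{D_*}\le V_{D_1}$, $w-1=f/V_{D_*}$ for some $f\in L^1(\mathbb R^d)$, and $W_0\le w\le W_1$ on $\mathbb R^d$ for constants $0<W_0\le1\le W_1$. Let $g=(w-1)V_{D_*}^{m-1}$. Then $$\mathsf I[g]\le\beta_1\,\mathcal J[w]+\beta_2\,\mathsf F[g],\qquad \beta_1=\frac{W_1^{2(2-m)}}{W_0},\quad \beta_2=2d(1-m)\Big(\big(W_1/W_0\big)^{2(2-m)}-1\Big).$$ In particular, with $\eta=\max\{1-W_0,W_1-1\}$, $|1-\beta_1|+\beta_2\to0$ as $\eta\to0^+$.
   Context: $V_D(x)=\big(D+\frac{1-m}{2m}|x|^2\big)^{-1/(1-m)}$. $\mathcal J[w]=\frac{m}{(m-1)^2}\int_{\mathbb R^d}\big|\nabla[(w^{m-1}-1)V_{D_*}^{m-1}]\big|^2wV_{D_*}\,dx$. Linearized functionals: $\mathsf F[g]=\frac12\int_{\mathbb R^d}|g|^2V_{D_*}^{2-m}dx$ and $\mathsf I[g]=m\int_{\mathbb R^d}|\nabla g|^2V_{D_*}dx$. *)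

theory Defs
  imports "HOL-Analysis.Analysis"
begin

definition VD :: "real \<Rightarrow> real \<Rightarrow> real^'n \<Rightarrow> real" where
  "VD m D x = (D + (1 - m) / (2 * m) * (norm x)\<^sup>2) powr (- 1 / (1 - m))"

definition grad :: "(real^'n \<Rightarrow> real) \<Rightarrow> real^'n \<Rightarrow> real^'n" where
  "grad u x = (\<chi> i. frechet_derivative u (at x) (axis i 1))"

definition C1 :: "(real^'n \<Rightarrow> real) \<Rightarrow> bool" where
  "C1 u \<longleftrightarrow> (\<forall>x. u differentiable (at x)) \<and> continuous_on UNIV (grad u)"

definition Jfun :: "real \<Rightarrow> real \<Rightarrow> (real^'n \<Rightarrow> real) \<Rightarrow> ennreal" where
  "Jfun m Ds w = (\<integral>\<^sup>+ x. ennreal (m / (m - 1)\<^sup>2 *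
      (norm (grad (\<lambda>y. (w y powr (m - 1) - 1) * VD m Ds y powr (m - 1)) x))\<^sup>2
      * w x * VD m Ds x) \<partial>lborel)"

definition Ffun :: "real \<Rightarrow> real \<Rightarrow> (real^'n \<Rightarrow> real) \<Rightarrow> ennreal" where
  "Ffun m Ds g = (\<integral>\<^sup>+ x. ennreal (1/2 * (g x)\<^sup>2 * VD m Ds x powr (2 - m)) \<partial>lborel)"

definition Ifun :: "real \<Rightarrow> real \<Rightarrow> (real^'n \<Rightarrow> real) \<Rightarrow> ennreal" where
  "Ifun m Ds g = (\<integral>\<^sup>+ x. ennreal (m * (norm (grad g x))\<^sup>2 * VD m Ds x) \<partial>lborel)"

definition beta1 :: "real \<Rightarrow> real \<Rightarrow> real \<Rightarrow> real" where
  "beta1 m W0 W1 = W1 powr (2 * (2 - m)) / W0"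

definition beta2 :: "nat \<Rightarrow> real \<Rightarrow> real \<Rightarrow> real \<Rightarrow> real" where
  "beta2 d m W0 W1 = 2 * real d * (1 - m) * ((W1 / W0) powr (2 * (2 - m)) - 1)"

end

theory Submission
  imports Defs
begin


lemma tangent_powr:
  fixes z a :: real assumes "0 < z" "0 < a" "a < 1"
  shows "z powr a \<le> 1 + a * (z - 1)"
  using Youngs_inequality_0[of a "1 - a" z 1] assms by (simp add: algebra_simps)

lemma R_bound:
  fixes w a :: real assumes w: "0 < w" and a: "0 < a" "a < 1"
  shows "\<bar>(w - 1) - w * (w powr a - 1) / a\<bar> \<le> (w - 1)^2"
proof -
  define s where "s = w powr a"
  have s0: "0 < s" using w by (simp add: s_def)
  have up: "s - 1 \<le> a * (w - 1)" using tangent_powr[OF w a] by (simp add: s_def)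
  have "(1/w) powr a \<le> 1 + a * (1/w - 1)" using tangent_powr[of "1/w" a] w a by simp
  moreover have "(1/w) powr a = 1 / s" using w by (simp add: s_def powr_divide)
  ultimately have "1/s \<le> 1 + a * (1/w - 1)" by simp
  hence "w \<le> s * (w + a * (1 - w))" using s0 w by (simp add: field_simps)
  hence lo: "a * (w - 1) * s \<le> w * (s - 1)" by (simp add: algebra_simps)
  have up2: "w * (s - 1) \<le> a * (w - 1) * w" using up w by (metis mult.commute mult_left_mono less_imp_le mult.assoc)
  have sb: "(w \<ge> 1 \<longrightarrow> 1 \<le> s \<and> s \<le> w) \<and> (w < 1 \<longrightarrow> w \<le> s \<and> s \<le> 1)"
  proof (intro conjI impI)
    assume "1 \<le> w" thus "1 \<le> s" using a by (simp add: s_def ge_one_powr_ge_zero)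
    show "s \<le> w" using \<open>1 \<le> w\<close> a powr_mono[of a 1 w] by (simp add: s_def)
  next
    assume "w < 1" thus "w \<le> s" using a w powr_mono'[of a 1 w] by (simp add: s_def)
    show "s \<le> 1" using \<open>w < 1\<close> a w by (simp add: s_def powr_le1)
  qed
  have L: "(w - 1) * s \<le> w * (s - 1) / a" using lo a by (simp add: field_simps)
  have U: "w * (s - 1) / a \<le> (w - 1) * w" using up2 a by (simp add: field_simps)
  define X where "X = w * (s - 1) / a"
  have "\<bar>(w - 1) - X\<bar> \<le> (w - 1)^2"
  proof (cases "w \<ge> 1")
    case True
    have "(w - 1) * 1 \<le> (w - 1) * s" using True sb by (intro mult_left_mono) auto
    hence "(w - 1) * (1 - w) \<le> (w-1) - X" "(w-1) - X \<le> 0"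
      using L U True unfolding X_def[symmetric] by (simp_all add: algebra_simps)
    moreover have "(w - 1) * (1 - w) = -((w-1)^2)" by (simp add: power2_eq_square algebra_simps)
    ultimately show ?thesis by (simp add: abs_le_iff)
  next
    case False
    have A: "(w - 1) * s \<le> (w - 1) * w" using False sb by (intro mult_left_mono_neg) auto
    have B: "(w - 1) * 1 \<le> (w - 1) * s" using False sb by (intro mult_left_mono_neg) auto
    have "(w - 1) * (1 - w) \<le> (w-1) - X" "(w-1) - X \<le> 0"
      using L U False A B unfolding X_def[symmetric] by (simp_all add: algebra_simps)
    moreover have "(w - 1) * (1 - w) = -((w-1)^2)" by (simp add: power2_eq_square algebra_simps)
    ultimately show ?thesis by (simp add: abs_le_iff)
  qed
  thus ?thesis by (simp add: X_def s_def)
qed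



lemma sq_split:
  fixes p q t :: real assumes "1 < t"
  shows "(p + q)^2 \<le> t * p^2 + t / (t - 1) * q^2"
proof -
  have "t * p^2 + t / (t - 1) * q^2 - (p + q)^2 = ((t - 1) * p - q)^2 / (t - 1)"
    using assms by (simp add: field_simps power2_eq_square)
  moreover have "((t - 1) * p - q)^2 / (t - 1) \<ge> 0" using assms by simp
  ultimately show ?thesis by linarith
qed

lemma norm_split:
  fixes X Y :: "'v::real_normed_vector" and t :: real assumes "1 < t"
  shows "norm (X + Y)^2 \<le> t * norm X^2 + t / (t - 1) * norm Y^2"
proof -
  have "norm (X + Y)^2 \<le> (norm X + norm Y)^2"
    by (simp add: norm_triangle_ineq power_mono)
  also have "\<dots> \<le> t * norm X^2 + t / (t - 1) * norm Y^2" using sq_split[OF assms] .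
  finally show ?thesis .
qed

lemma pt_ineq:
  fixes a b :: "'v::real_normed_vector" and m w h V W0 W1 :: real and d :: nat
  assumes m: "0 < m" "m < 1" and w: "W0 \<le> w" "w \<le> W1" and W: "0 < W0" "W0 \<le> 1" "1 \<le> W1" "W0 < W1"
    and h: "0 < h" and V: "0 < V" and nb: "norm b^2 \<le> 2 * (1 - m) / m * h" and d: "3 \<le> d"
  shows "m * norm ((w - 1) *\<^sub>R b + h *\<^sub>R a)^2 * V
     \<le> beta1 m W0 W1 * (m / (m - 1)^2 * norm ((w powr (m - 1) - 1) *\<^sub>R b + h *\<^sub>R (((m - 1) * w powr (m - 1 - 1)) *\<^sub>R a))^2 * w * V)
       + beta2 d m W0 W1 * (1/2 * (w - 1)^2 * h * V)"
proof -
  have w0: "0 < w" using w W by linarith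
  define e where "e = w powr (m - 1 - 1)"
  have e0: "0 < e" using w0 by (simp add: e_def)
  define k where "k = (m - 1) * e"
  have k0: "k \<noteq> 0" using m e0 by (simp add: k_def)
  define P where "P = (w powr (m - 1) - 1) *\<^sub>R b + h *\<^sub>R (((m - 1) * w powr (m - 1 - 1)) *\<^sub>R a)"
  define Rc where "Rc = (w - 1) - (w powr (m - 1) - 1) / k"
  define t where "t = W1 / W0"
  have t1: "1 < t" using W by (simp add: t_def)
  have dec: "(w - 1) *\<^sub>R b + h *\<^sub>R a = (1/k) *\<^sub>R P + Rc *\<^sub>R b"
    using k0 unfolding P_def Rc_def e_def[symmetric] k_def[symmetric]
    by (simp add: algebra_simps scaleR_add_right) (simp add: scaleR_add_left[symmetric] add_divide_distrib[symmetric])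
  have "norm ((w - 1) *\<^sub>R b + h *\<^sub>R a)^2 \<le> t * norm ((1/k) *\<^sub>R P)^2 + t / (t - 1) * norm (Rc *\<^sub>R b)^2"
    unfolding dec by (rule norm_split[OF t1])
  also have "\<dots> = t * (norm P^2 / k^2) + t / (t - 1) * (Rc^2 * norm b^2)"
    by (simp add: power_mult_distrib power_divide)
  finally have I1: "norm ((w - 1) *\<^sub>R b + h *\<^sub>R a)^2 \<le> t * (norm P^2 / k^2) + t / (t - 1) * (Rc^2 * norm b^2)" .
  have ee: "e^2 * w = 1 / w powr (3 - 2*m)"
    using w0 by (simp add: e_def power2_eq_square powr_add[symmetric] powr_minus[symmetric] powr_diff power3_eq_cube)
  have "W1 powr (2 * (2 - m)) = W1 * W1 powr (3 - 2*m)"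
  proof -
    have "W1 * W1 powr (3 - 2*m) = W1 powr (1 + (3 - 2*m))" using W powr_add[of W1 1 "3 - 2*m"] by simp
    thus ?thesis by (simp add: algebra_simps)
  qed
  hence b1: "beta1 m W0 W1 = t * W1 powr (3 - 2*m)" by (simp add: beta1_def t_def)
  have mono: "w powr (3 - 2*m) \<le> W1 powr (3 - 2*m)" using w w0 m by (intro powr_mono2) auto
  have wp0: "0 < w powr (3 - 2*m)" using w0 by simp
  have p1: "t \<le> beta1 m W0 W1 * (w * e^2)"
  proof -
    have "beta1 m W0 W1 * (w * e^2) = t * (W1 powr (3 - 2*m) / w powr (3 - 2*m))"
      using ee b1 by (simp add: mult.commute)
    moreover have "1 \<le> W1 powr (3 - 2*m) / w powr (3 - 2*m)" using mono wp0 by simp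
    ultimately show ?thesis using t1 by (metis mult_left_mono mult.right_neutral less_imp_le less_trans zero_less_one)
  qed
  have k2: "k^2 = (m - 1)^2 * e^2" by (simp add: k_def power_mult_distrib)
  have part1: "m * V * (t * (norm P^2 / k^2)) \<le> beta1 m W0 W1 * (m / (m - 1)^2 * norm P^2 * w * V)"
  proof -
    have "t / k^2 \<le> beta1 m W0 W1 * w / (m - 1)^2"
      using p1 m e0 unfolding k2 by (simp add: field_simps)
    hence "(m * V * norm P^2) * (t / k^2) \<le> (m * V * norm P^2) * (beta1 m W0 W1 * w / (m - 1)^2)"
      using m V by (intro mult_left_mono) auto
    thus ?thesis by (simp add: field_simps)
  qed
  have Rc_eq: "Rc = (w - 1) - w * (w powr (1 - m) - 1) / (1 - m)"
  proof -
    have "(w powr (m - 1) - 1) / k = w * (w powr (1 - m) - 1) / (1 - m)"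
    proof -
      define q where "q = w powr (1 - m)"
      have q0: "0 < q" using w0 by (simp add: q_def)
      have E1: "w powr (m - 1) = 1 / q"
        using w0 powr_minus[of w "1 - m"] by (simp add: q_def divide_inverse)
      have "e * w = w powr (m - 1)" using w0 powr_add[of w "m - 2" 1] by (simp add: e_def)
      hence E2: "e = 1 / (q * w)" using E1 w0 q0 by (simp add: field_simps)
      have "(1 / q - 1) / ((m - 1) * (1 / (q * w))) = w * (q - 1) / (1 - m)"
        using m q0 w0 by (simp add: field_simps)
      thus ?thesis unfolding k_def E1 E2 q_def[symmetric] .
    qed
    thus ?thesis by (simp add: Rc_def)
  qed
  have Rb: "\<bar>Rc\<bar> \<le> (w - 1)^2" unfolding Rc_eq using R_bound[OF w0, of "1 - m"] m by simp
  have w1: "(w - 1)^2 \<le> (W1 - W0)^2" 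
  proof -
    have "\<bar>w - 1\<bar> \<le> W1 - W0" using w W by (simp add: abs_le_iff)
    hence "\<bar>w - 1\<bar>^2 \<le> (W1 - W0)^2" by (intro power_mono) auto
    thus ?thesis by simp
  qed
  have Rc2: "Rc^2 \<le> (w - 1)^2 * (W1 - W0)^2"
  proof -
    have "Rc^2 \<le> ((w - 1)^2)^2" using Rb by (metis abs_ge_zero power2_abs power_mono)
    also have "\<dots> = (w - 1)^2 * (w - 1)^2" by (simp add: power2_eq_square)
    also have "\<dots> \<le> (w - 1)^2 * (W1 - W0)^2" using w1 by (intro mult_left_mono) auto
    finally show ?thesis .
  qed
  have tt: "t / (t - 1) * (W1 - W0)^2 = W1 * (W1 - W0)"
    using W by (simp add: t_def field_simps power2_eq_square)
  have tsq: "1 \<le> t * t" using t1 mult_mono[of 1 t 1 t] by auto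
  have key: "2 * W1 * (W1 - W0) \<le> real d * ((W1 / W0) powr (2 * (2 - m)) - 1)"
  proof -
    have "t^2 \<le> t powr (2 * (2 - m))"
    proof -
      have "t^2 = t powr 2" using t1 by (simp add: powr_realpow)
      also have "\<dots> \<le> t powr (2 * (2 - m))" using t1 m by (intro powr_mono) auto
      finally show ?thesis .
    qed
    moreover have "W1 * (W1 - W0) = W0^2 * (t * (t - 1))" using W by (simp add: t_def field_simps power2_eq_square)
    moreover have "W0^2 * (t * (t - 1)) \<le> t * (t - 1)"
    proof -
      have "W0^2 \<le> 1" using W by (simp add: power_le_one)
      thus ?thesis using t1 by (metis mult_right_mono mult_1 less_imp_le mult_pos_pos zero_less_one less_trans diff_gt_0_iff_gt)
    qed
    moreover have "2 * (t * (t - 1)) \<le> 3 * (t^2 - 1)"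
      using t1 tsq by (simp add: power2_eq_square algebra_simps)
    moreover have "3 * (t^2 - 1) \<le> real d * (t^2 - 1)" using d t1 tsq
      by (intro mult_right_mono) (auto simp: power2_eq_square)
    moreover have "real d * (t^2 - 1) \<le> real d * (t powr (2 * (2 - m)) - 1)"
      using calculation(1) by (intro mult_left_mono) auto
    ultimately show ?thesis unfolding t_def[symmetric] by linarith
  qed
  have part2: "m * V * (t / (t - 1) * (Rc^2 * norm b^2)) \<le> beta2 d m W0 W1 * (1/2 * (w - 1)^2 * h * V)"
  proof -
    have tq: "0 \<le> t / (t - 1)" using t1 by simp
    have "t / (t - 1) * (Rc^2 * norm b^2) \<le> t / (t - 1) * (((w - 1)^2 * (W1 - W0)^2) * (2 * (1 - m) / m * h))"
      using Rc2 nb tq by (intro mult_left_mono mult_mono) auto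
    also have "\<dots> = (W1 * (W1 - W0)) * (w - 1)^2 * (2 * (1 - m) / m * h)"
      unfolding tt[symmetric] by (simp only: mult_ac)
    finally have A: "t / (t - 1) * (Rc^2 * norm b^2) \<le> (W1 * (W1 - W0)) * (w - 1)^2 * (2 * (1 - m) / m * h)" .
    have "m * V * (t / (t - 1) * (Rc^2 * norm b^2)) \<le> m * V * ((W1 * (W1 - W0)) * (w - 1)^2 * (2 * (1 - m) / m * h))"
      using A m V by (intro mult_left_mono) auto
    also have "\<dots> = (2 * W1 * (W1 - W0)) * ((1 - m) * (w - 1)^2 * h * V)" using m by (simp add: field_simps)
    also have "\<dots> \<le> (real d * ((W1 / W0) powr (2 * (2 - m)) - 1)) * ((1 - m) * (w - 1)^2 * h * V)"
      using key m h V by (intro mult_right_mono) auto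
    also have "\<dots> = beta2 d m W0 W1 * (1/2 * (w - 1)^2 * h * V)" by (simp add: beta2_def)
    finally show ?thesis .
  qed
  have "m * norm ((w - 1) *\<^sub>R b + h *\<^sub>R a)^2 * V \<le> m * V * (t * (norm P^2 / k^2) + t / (t - 1) * (Rc^2 * norm b^2))"
    using I1 m V by (simp add: mult.commute mult.left_commute mult_left_mono)
  also have "\<dots> = m * V * (t * (norm P^2 / k^2)) + m * V * (t / (t - 1) * (Rc^2 * norm b^2))"
    by (simp add: distrib_left)
  finally show ?thesis using part1 part2 unfolding P_def by linarith
qed



lemma lim_part:
  fixes m :: real and d :: nat
  shows "\<forall>\<epsilon>>0. \<exists>\<delta>>0. \<forall>V0 V1. 0 < V0 \<and> V0 \<le> 1 \<and> 1 \<le> V1 \<and> max (1 - V0) (V1 - 1) < \<delta> \<longrightarrow>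
             \<bar>1 - beta1 m V0 V1\<bar> + beta2 d m V0 V1 < \<epsilon>"
proof (intro allI impI)
  fix \<epsilon> :: real assume e: "\<epsilon> > 0"
  define F where "F = (\<lambda>p::real\<times>real. \<bar>1 - snd p powr (2 * (2 - m)) / fst p\<bar>
       + 2 * real d * (1 - m) * ((snd p / fst p) powr (2 * (2 - m)) - 1))"
  have "continuous (at (1,1)) F" unfolding F_def
    by (auto intro!: continuous_intros)
  moreover have F11: "F (1,1) = 0" by (simp add: F_def)
  ultimately obtain \<delta> where d0: "\<delta> > 0" and dd: "\<And>p. dist p (1,1) < \<delta> \<Longrightarrow> dist (F p) 0 < \<epsilon>"
    using e unfolding continuous_at_eps_delta by metis
  show "\<exists>\<delta>>0. \<forall>V0 V1. 0 < V0 \<and> V0 \<le> 1 \<and> 1 \<le> V1 \<and> max (1 - V0) (V1 - 1) < \<delta> \<longrightarrow>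
             \<bar>1 - beta1 m V0 V1\<bar> + beta2 d m V0 V1 < \<epsilon>"
  proof (intro exI[of _ "\<delta>/2"] conjI allI impI)
    show "\<delta>/2 > 0" using d0 by simp
    fix V0 V1 :: real assume H: "0 < V0 \<and> V0 \<le> 1 \<and> 1 \<le> V1 \<and> max (1 - V0) (V1 - 1) < \<delta>/2"
    have "dist (V0, V1) (1,1) \<le> dist V0 1 + dist V1 1"
      using sqrt_add_le_add_sqrt[of "(dist V0 1)^2" "(dist V1 1)^2"] by (simp add: dist_Pair_Pair)
    also have "\<dots> < \<delta>" using H by (simp add: dist_real_def max_def split: if_splits)
    finally have "dist (F (V0, V1)) 0 < \<epsilon>" by (rule dd)
    hence "F (V0, V1) < \<epsilon>" by (simp add: dist_real_def)
    thus "\<bar>1 - beta1 m V0 V1\<bar> + beta2 d m V0 V1 < \<epsilon>"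
      by (simp add: F_def beta1_def beta2_def)
  qed
qed



lemma grad_eq:
  assumes "(u has_derivative u') (at x)"
  shows "grad u x = (\<chi> i. u' (axis i 1))"
  using frechet_derivative_at[OF assms] by (simp add: grad_def)

lemma setup_facts:
  fixes w :: "real^'n \<Rightarrow> real" and m Ds :: real
  assumes m: "0 < m" "m < 1" and Ds: "0 < Ds"
    and wC1: "C1 w" and wpos: "\<forall>x. 0 < w x"
  assumes c_def: "c = (1 - m) / (2 * m)"
  assumes h_def: "h = (\<lambda>x::real^'n. Ds + c * (norm x)^2)"
  shows "\<forall>x. 0 < h x"
    and "\<forall>x::real^'n. VD m Ds x powr (m - 1) = h x"
    and "\<forall>x::real^'n. VD m Ds x powr (2 - m) = VD m Ds x / h x"
    and "\<forall>x::real^'n. 0 < VD m Ds x"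
    and "\<forall>x. grad h x = (2 * c) *\<^sub>R x"
    and "\<forall>x. norm (grad h x)^2 \<le> 2 * (1 - m) / m * h x"
    and "\<forall>x. grad (\<lambda>y. (w y - 1) * h y) x = (w x - 1) *\<^sub>R grad h x + h x *\<^sub>R grad w x"
    and "\<forall>x. grad (\<lambda>y. (w y powr (m - 1) - 1) * h y) x
          = (w x powr (m - 1) - 1) *\<^sub>R grad h x + h x *\<^sub>R (((m - 1) * w x powr (m - 1 - 1)) *\<^sub>R grad w x)"
    and "continuous_on UNIV h" and "continuous_on UNIV w" and "continuous_on UNIV (grad w)"
    and "continuous_on UNIV (VD m Ds :: real^'n \<Rightarrow> real)"
proof -
  have c0: "0 < c" using m by (simp add: c_def)
  show h0: "\<forall>x. 0 < h x" using Ds c0 by (simp add: h_def add_pos_nonneg)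
  have VDd: "(VD m Ds :: real^'n \<Rightarrow> real) = (\<lambda>x. h x powr (-1 / (1 - m)))" by (simp add: VD_def h_def c_def fun_eq_iff)
  show "\<forall>x::real^'n. VD m Ds x powr (m - 1) = h x"
  proof
    fix x
    have "-1 / (1 - m) * (m - 1) = 1" using m by (simp add: field_simps)
    thus "VD m Ds x powr (m - 1) = h x" using h0[rule_format, of x] by (simp add: VDd powr_powr)
  qed
  show "\<forall>x::real^'n. VD m Ds x powr (2 - m) = VD m Ds x / h x"
  proof
    fix x
    have ex: "-1 / (1 - m) * (2 - m) = -1 / (1 - m) + (-1)" using m by (simp add: field_simps)
    have hx: "0 < h x" using h0 by simp
    have E2: "h x powr (-1) = 1 / h x" using hx by (simp add: powr_minus_divide)
    have "VD m Ds x powr (2 - m) = h x powr (-1 / (1 - m) * (2 - m))"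
      using hx by (simp add: VDd powr_powr)
    also have "\<dots> = h x powr (-1 / (1 - m)) * h x powr (-1)" unfolding ex by (rule powr_add)
    finally show "VD m Ds x powr (2 - m) = VD m Ds x / h x" using E2 by (simp add: VDd)
  qed
  show "\<forall>x::real^'n. 0 < VD m Ds x" proof fix x :: "real^'n" show "0 < VD m Ds x" using h0[rule_format, of x] by (simp add: VDd) qed
  have hd: "\<And>x. (h has_derivative (\<lambda>v. 2 * c * (x \<bullet> v))) (at x)"
  proof -
    fix x :: "real^'n"
    have "h = (\<lambda>y. Ds + c * (y \<bullet> y))" by (simp add: h_def fun_eq_iff power2_norm_eq_inner)
    moreover have "((\<lambda>y. Ds + c * (y \<bullet> y)) has_derivative (\<lambda>v. 2 * c * (x \<bullet> v))) (at x)"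
      by (auto intro!: derivative_eq_intros simp: inner_commute algebra_simps)
    ultimately show "(h has_derivative (\<lambda>v. 2 * c * (x \<bullet> v))) (at x)" by simp
  qed
  show gh: "\<forall>x. grad h x = (2 * c) *\<^sub>R x"
    using grad_eq[OF hd] by (simp add: vec_eq_iff inner_axis)
  show "\<forall>x. norm (grad h x)^2 \<le> 2 * (1 - m) / m * h x"
  proof
    fix x
    have "norm (grad h x)^2 = (2 * c)^2 * (norm x)^2" using gh c0 by (simp add: power_mult_distrib)
    also have "\<dots> = 2 * (1 - m) / m * (c * (norm x)^2)" using m by (simp add: c_def field_simps power2_eq_square)
    also have "\<dots> \<le> 2 * (1 - m) / m * h x" using m Ds by (intro mult_left_mono) (auto simp: h_def)
    finally show "norm (grad h x)^2 \<le> 2 * (1 - m) / m * h x" .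
  qed
  define W' where "W' x = frechet_derivative w (at x)" for x
  have wd: "\<And>x. (w has_derivative W' x) (at x)"
    using wC1 by (simp add: C1_def W'_def frechet_derivative_works)
  have gw: "\<And>x. grad w x = (\<chi> i. W' x (axis i 1))" using grad_eq[OF wd] .
  show "\<forall>x. grad (\<lambda>y. (w y - 1) * h y) x = (w x - 1) *\<^sub>R grad h x + h x *\<^sub>R grad w x"
  proof
    fix x
    have "((\<lambda>y. (w y - 1) * h y) has_derivative (\<lambda>v. (w x - 1) * (2 * c * (x \<bullet> v)) + W' x v * h x)) (at x)"
      using has_derivative_mult[OF has_derivative_diff[OF wd has_derivative_const] hd] by simp
    from grad_eq[OF this] show "grad (\<lambda>y. (w y - 1) * h y) x = (w x - 1) *\<^sub>R grad h x + h x *\<^sub>R grad w x"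
      using gw gh by (simp add: vec_eq_iff inner_axis algebra_simps)
  qed
  show "\<forall>x. grad (\<lambda>y. (w y powr (m - 1) - 1) * h y) x
          = (w x powr (m - 1) - 1) *\<^sub>R grad h x + h x *\<^sub>R (((m - 1) * w x powr (m - 1 - 1)) *\<^sub>R grad w x)"
  proof
    fix x
    have pd: "((\<lambda>t. t powr (m - 1)) has_derivative (\<lambda>v. (m - 1) * w x powr (m - 1 - 1) * v)) (at (w x))"
      using has_real_derivative_powr[of "w x" "m - 1"] wpos
      by (simp add: has_field_derivative_def)
    have cd: "((\<lambda>y. w y powr (m - 1)) has_derivative (\<lambda>v. (m - 1) * w x powr (m - 1 - 1) * W' x v)) (at x)"
      using has_derivative_compose[OF wd pd] by simp
    have "((\<lambda>y. (w y powr (m - 1) - 1) * h y) has_derivative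
        (\<lambda>v. (w x powr (m - 1) - 1) * (2 * c * (x \<bullet> v)) + ((m - 1) * w x powr (m - 1 - 1) * W' x v) * h x)) (at x)"
      using has_derivative_mult[OF has_derivative_diff[OF cd has_derivative_const] hd] by simp
    from grad_eq[OF this] show "grad (\<lambda>y. (w y powr (m - 1) - 1) * h y) x
          = (w x powr (m - 1) - 1) *\<^sub>R grad h x + h x *\<^sub>R (((m - 1) * w x powr (m - 1 - 1)) *\<^sub>R grad w x)"
      using gw gh by (simp add: vec_eq_iff inner_axis algebra_simps)
  qed
  show hc: "continuous_on UNIV h" unfolding h_def by (intro continuous_intros)
  show "continuous_on UNIV w"
    using wd by (intro continuous_at_imp_continuous_on) (auto intro: has_derivative_continuous)
  show "continuous_on UNIV (grad w)" using wC1 by (simp add: C1_def)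
  show "continuous_on UNIV (VD m Ds :: real^'n \<Rightarrow> real)" unfolding VDd using hc h0
    by (intro continuous_intros) (use h0 in \<open>auto simp: order_less_imp_not_eq2\<close>)
qed



theorem mainTheorem13:
  fixes w :: "real^'n \<Rightarrow> real"
    and m D0 D1 Ds W0 W1 :: real
  assumes d3: "CARD('n) \<ge> 3"
    and m: "0 < m" "m < 1"
    and D: "0 < D1" "D1 \<le> Ds" "Ds \<le> D0"
    and wC1: "C1 w"
    and wV: "\<forall>x. VD m D0 x \<le> w x * VD m Ds x \<and> w x * VD m Ds x \<le> VD m D1 x"
    and wL1: "\<exists>f. integrable lborel f \<and> (\<forall>x. w x - 1 = f x / VD m Ds x)"
    and W: "0 < W0" "W0 \<le> 1" "1 \<le> W1"
    and wW: "\<forall>x. W0 \<le> w x \<and> w x \<le> W1"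
  shows "Ifun m Ds (\<lambda>x. (w x - 1) * VD m Ds x powr (m - 1))
           \<le> ennreal (beta1 m W0 W1) * Jfun m Ds w
             + ennreal (beta2 CARD('n) m W0 W1) * Ffun m Ds (\<lambda>x. (w x - 1) * VD m Ds x powr (m - 1))
       \<and> (\<forall>\<epsilon>>0. \<exists>\<delta>>0. \<forall>V0 V1. 0 < V0 \<and> V0 \<le> 1 \<and> 1 \<le> V1 \<and> max (1 - V0) (V1 - 1) < \<delta> \<longrightarrow>
             \<bar>1 - beta1 m V0 V1\<bar> + beta2 CARD('n) m V0 V1 < \<epsilon>)"
proof -
  have Ds: "0 < Ds" using D by linarith
  have wpos: "\<forall>x. 0 < w x" using wW W by (metis less_le_trans)
  define c where "c = (1 - m) / (2 * m)"
  define h where "h = (\<lambda>x::real^'n. Ds + c * (norm x)^2)"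
  note S = setup_facts[OF m Ds wC1 wpos c_def h_def]
  define g where "g = (\<lambda>x. (w x - 1) * VD m Ds x powr (m - 1))"
  have g_eq: "g = (\<lambda>y. (w y - 1) * h y)" using S(2) by (simp add: g_def)
  have j_eq: "(\<lambda>y. (w y powr (m - 1) - 1) * VD m Ds y powr (m - 1)) = (\<lambda>y. (w y powr (m - 1) - 1) * h y)"
    using S(2) by simp
  define V where "V = (VD m Ds :: real^'n \<Rightarrow> real)"
  define II where "II x = m * (norm (grad g x))\<^sup>2 * V x" for x
  define JI where "JI x = m / (m - 1)\<^sup>2 *
      (norm (grad (\<lambda>y. (w y powr (m - 1) - 1) * VD m Ds y powr (m - 1)) x))\<^sup>2 * w x * V x" for x
  define FI where "FI x = 1/2 * (g x)\<^sup>2 * V x powr (2 - m)" for x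
  have Ieq: "Ifun m Ds g = (\<integral>\<^sup>+ x. ennreal (II x) \<partial>lborel)" by (simp add: Ifun_def II_def V_def)
  have Jeq: "Jfun m Ds w = (\<integral>\<^sup>+ x. ennreal (JI x) \<partial>lborel)" by (simp add: Jfun_def JI_def V_def)
  have Feq: "Ffun m Ds g = (\<integral>\<^sup>+ x. ennreal (FI x) \<partial>lborel)" by (simp add: Ffun_def FI_def V_def)
  have JI_eq: "JI x = m / (m - 1)\<^sup>2 * (norm ((w x powr (m - 1) - 1) *\<^sub>R grad h x + h x *\<^sub>R (((m - 1) * w x powr (m - 1 - 1)) *\<^sub>R grad w x)))\<^sup>2 * w x * V x" for x
    unfolding JI_def j_eq using S(8) by simp
  have FI_eq: "FI x = 1/2 * (w x - 1)^2 * h x * V x" for x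
  proof -
    have "FI x = 1/2 * ((w x - 1) * h x)^2 * (V x / h x)" unfolding FI_def g_eq V_def using S(3) by simp
    also have "\<dots> = 1/2 * (w x - 1)^2 * ((h x)^2 * (V x / h x))" by (simp add: power_mult_distrib mult_ac)
    also have "(h x)^2 * (V x / h x) = h x * V x" using S(1)[rule_format, of x] by (simp add: power2_eq_square)
    finally show ?thesis by (simp add: mult_ac)
  qed
  have II_eq: "II x = m * (norm ((w x - 1) *\<^sub>R grad h x + h x *\<^sub>R grad w x))\<^sup>2 * V x" for x
    unfolding II_def g_eq using S(7) by simp
  have main: "Ifun m Ds g \<le> ennreal (beta1 m W0 W1) * Jfun m Ds w + ennreal (beta2 CARD('n) m W0 W1) * Ffun m Ds g"
  proof (cases "W0 = W1")
    case True
    hence w1: "\<And>x. w x = 1" using wW W by (metis order_antisym order_trans)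
    have "\<And>x. II x = 0"
    proof -
      fix x
      have "grad w x = grad (\<lambda>_. 1) x" using w1 by (metis ext)
      also have "\<dots> = 0" using grad_eq[OF has_derivative_const[of "1::real" "at x"]] by (simp add: vec_eq_iff)
      finally show "II x = 0" unfolding II_eq using w1 by simp
    qed
    hence "Ifun m Ds g = 0" unfolding Ieq by simp
    thus ?thesis by simp
  next
    case False
    hence W01: "W0 < W1" using W by linarith
    have b1: "0 \<le> beta1 m W0 W1" using W by (simp add: beta1_def)
    have b2: "0 \<le> beta2 CARD('n) m W0 W1"
    proof -
      have "1 \<le> W1 / W0" using W W01 by simp
      hence "1 \<le> (W1 / W0) powr (2 * (2 - m))" using m by (simp add: ge_one_powr_ge_zero)
      thus ?thesis using m by (simp add: beta2_def)
    qed
    have JI0: "0 \<le> JI x" for x using m wpos S(4) unfolding JI_def V_def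
      by (intro mult_nonneg_nonneg divide_nonneg_nonneg) (auto intro: less_imp_le)
    have FI0: "0 \<le> FI x" for x using S(1) S(4) unfolding FI_eq V_def
      by (intro mult_nonneg_nonneg) (auto intro: less_imp_le)
    have pt: "ennreal (II x) \<le> ennreal (beta1 m W0 W1) * ennreal (JI x) + ennreal (beta2 CARD('n) m W0 W1) * ennreal (FI x)" for x
    proof -
      have "II x \<le> beta1 m W0 W1 * JI x + beta2 CARD('n) m W0 W1 * FI x"
        unfolding II_eq JI_eq FI_eq
        using pt_ineq[OF m, of W0 "w x" W1 "h x" "V x" "grad h x" "CARD('n)" "grad w x"] wW W W01 S(1) S(4) S(6) d3
        by (simp add: V_def)
      hence "ennreal (II x) \<le> ennreal (beta1 m W0 W1 * JI x + beta2 CARD('n) m W0 W1 * FI x)"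
        by (rule ennreal_leI)
      also have "\<dots> = ennreal (beta1 m W0 W1) * ennreal (JI x) + ennreal (beta2 CARD('n) m W0 W1) * ennreal (FI x)"
        using b1 b2 JI0 FI0 by (simp add: ennreal_plus ennreal_mult)
      finally show ?thesis .
    qed
    have cw: "continuous_on UNIV w" by (rule S(10))
    have cgw: "continuous_on UNIV (grad w)" by (rule S(11))
    have ch: "continuous_on UNIV h" by (rule S(9))
    have cV: "continuous_on UNIV V" unfolding V_def by (rule S(12))
    have gh: "grad h = (\<lambda>x. (2 * c) *\<^sub>R x)" using S(5) by auto
    have wne: "\<forall>x\<in>UNIV. w x \<noteq> 0" using wpos by (metis less_irrefl)
    have cJ: "continuous_on UNIV JI"
      unfolding JI_eq[abs_def] gh using cw cgw ch cV wne
      by (intro continuous_intros) auto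
    have cF: "continuous_on UNIV FI"
      unfolding FI_eq[abs_def] using cw ch cV by (intro continuous_intros)
    have mJ: "JI \<in> borel_measurable borel" using cJ by (rule borel_measurable_continuous_onI)
    have mF: "FI \<in> borel_measurable borel" using cF by (rule borel_measurable_continuous_onI)
    have "Ifun m Ds g \<le> (\<integral>\<^sup>+ x. ennreal (beta1 m W0 W1) * ennreal (JI x) + ennreal (beta2 CARD('n) m W0 W1) * ennreal (FI x) \<partial>lborel)"
      unfolding Ieq using pt by (intro nn_integral_mono) auto
    also have "\<dots> = (\<integral>\<^sup>+ x. ennreal (beta1 m W0 W1) * ennreal (JI x) \<partial>lborel) + (\<integral>\<^sup>+ x. ennreal (beta2 CARD('n) m W0 W1) * ennreal (FI x) \<partial>lborel)"
      using mJ mF by (intro nn_integral_add) auto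
    also have "\<dots> = ennreal (beta1 m W0 W1) * Jfun m Ds w + ennreal (beta2 CARD('n) m W0 W1) * Ffun m Ds g"
      unfolding Jeq Feq using mJ mF by (simp add: nn_integral_cmult)
    finally show ?thesis .
  qed
  show ?thesis using main lim_part[of m "CARD('n)"] unfolding g_def by blast
qed

end
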